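(* Let $B_0,\ldots,B_{m-1}$ be $d \times d$ real matrices, and suppose that $x \in \Sigma_m^\omega$ is very weakly extremal for $\mathcal{B}=\{B_0,\ldots,B_{m-1}\}$. Then there exists $y \in \Sigma_m^\omega$ which is recurrent and strongly extremal for $\mathcal{B}$, and satisfies $\mathcal L(y)\subseteq\mathcal L(x)$.
   Context: $\Sigma_m=\{0,\ldots,m-1\}$, $\Sigma_m^\omega$ is the set of infinite sequences $x=x_1x_2\cdots$ over $\Sigma_m$. A subword of $x$ is a finite word $x_{k+1}\cdots x_{k+n}$ with $k\ge0$, $n\ge1$; $\mathcal L(x)$ denotes the set of all subwords of $x$. A sequence is recurrent if every one of its subwords occurs infinitely many times in it. The joint spectral radius is $\varrho(\mathcal{B})=\lim_{n\to\infty}\max\{\|B_{i_1}\cdots B_{i_n}\|^{1/n}: i_j\in\Sigma_m\}$, with $\|\cdot\|$ the Euclidean operator norm. A sequence $x$ is strongly extremal for $\mathcal{B}$ if there is $\delta>0$ with $\|B_{x_n}\cdots B_{x_1}\|\ge\delta\varrho(\mathcal{B})^n$ for all $n\ge1$, and very weakly extremal for $\mathcal{B}$ if $\limsup_{n\to\infty}\|B_{x_n}\cdots B_{x_1}\|^{1/n}=\varrho(\mathcal{B})$. *)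

theory Defs
  imports "HOL-Analysis.Analysis"
begin

text \<open>A family B_0..B_{m-1} is a function B :: nat => matrix, only indices < m matter.
  Infinite sequences x = x_1 x_2 ... over Sigma_m are functions nat => nat,
  read from index 1 on; we require x n < m for all n (the value at 0 is unused).\<close>

definition opnorm :: "real^'d^'d \<Rightarrow> real" where
  "opnorm A = onorm (\<lambda>v. A *v v)"

fun wprod :: "(nat \<Rightarrow> real^'d^'d) \<Rightarrow> (nat \<Rightarrow> nat) \<Rightarrow> nat \<Rightarrow> real^'d^'d" where
  "wprod B x 0 = mat 1"
| "wprod B x (Suc n) = B (x (Suc n)) ** wprod B x n"

definition seqs :: "nat \<Rightarrow> (nat \<Rightarrow> nat) set" where
  "seqs m = {x. \<forall>n. x n < m}"

definition jsr :: "(nat \<Rightarrow> real^'d^'d) \<Rightarrow> nat \<Rightarrow> real" where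
  "jsr B m = lim (\<lambda>n. Max ((\<lambda>w. opnorm (wprod B w n) powr (1 / real n)) `
                        {w. \<forall>j \<in> {1..n}. w j < m}))"

definition strongly_extremal :: "(nat \<Rightarrow> real^'d^'d) \<Rightarrow> nat \<Rightarrow> (nat \<Rightarrow> nat) \<Rightarrow> bool" where
  "strongly_extremal B m x \<longleftrightarrow>
     (\<exists>\<delta>>0. \<forall>n\<ge>1. opnorm (wprod B x n) \<ge> \<delta> * jsr B m ^ n)"

definition very_weakly_extremal :: "(nat \<Rightarrow> real^'d^'d) \<Rightarrow> nat \<Rightarrow> (nat \<Rightarrow> nat) \<Rightarrow> bool" where
  "very_weakly_extremal B m x \<longleftrightarrow>
     limsup (\<lambda>n. ereal (opnorm (wprod B x n) powr (1 / real n))) = ereal (jsr B m)"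

definition subwords :: "(nat \<Rightarrow> nat) \<Rightarrow> nat list set" where
  "subwords x = {map x [k+1..<k+n+1] | k n. n \<ge> 1}"

definition recurrent :: "(nat \<Rightarrow> nat) \<Rightarrow> bool" where
  "recurrent x \<longleftrightarrow>
     (\<forall>u \<in> subwords x. infinite {k. map x [k+1..<k+length u+1] = u})"

end

theory Submission
  imports Defs
begin


definition sh :: "nat \<Rightarrow> (nat\<Rightarrow>nat) \<Rightarrow> nat \<Rightarrow> nat" where "sh k z = (\<lambda>i. z (k+i))"

lemma opnorm_nonneg: "0 \<le> opnorm A"
  unfolding opnorm_def by (rule onorm_pos_le) simp

lemma opnorm_mult: "opnorm (A ** C) \<le> opnorm A * opnorm C"
proof -
  have "(\<lambda>v. (A ** C) *v v) = (\<lambda>v. A *v v) \<circ> (\<lambda>v. C *v v)"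
    by (auto simp: matrix_vector_mul_assoc)
  then show ?thesis unfolding opnorm_def by (simp add: onorm_compose)
qed

lemma opnorm_one: "opnorm (mat 1 :: real^'d^'d) \<le> 1"
proof -
  have "(\<lambda>v. (mat 1 :: real^'d^'d) *v v) = (\<lambda>v. v)" by simp
  then show ?thesis unfolding opnorm_def using onorm_id_le by metis
qed

lemma wprod_split: "wprod B z (k + j) = wprod B (sh k z) j ** wprod B z k"
  by (induction j) (auto simp: sh_def matrix_mul_assoc)

lemma wprod_cong: "(\<forall>i\<in>{1..n}. w i = w' i) \<Longrightarrow> wprod B w n = wprod B w' n"
  by (induction n) auto

lemma wprod_bound:
  assumes "\<forall>i\<in>{1..n}. w i < m"
  shows "opnorm (wprod B w n) \<le> (1 + (\<Sum>i<m. opnorm (B i))) ^ n"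
  using assms
proof (induction n)
  case 0 then show ?case using opnorm_one by simp
next
  case (Suc n)
  have wl: "w (Suc n) < m" using Suc.prems by auto
  have "opnorm (B (w (Suc n))) \<le> (\<Sum>i<m. opnorm (B i))"
    using wl by (intro member_le_sum) (auto simp: opnorm_nonneg)
  then have b: "opnorm (B (w (Suc n))) \<le> 1 + (\<Sum>i<m. opnorm (B i))" by simp
  have ih: "opnorm (wprod B w n) \<le> (1 + (\<Sum>i<m. opnorm (B i))) ^ n"
    using Suc by auto
  have "opnorm (wprod B w (Suc n)) \<le> opnorm (B (w (Suc n))) * opnorm (wprod B w n)"
    by (simp add: opnorm_mult)
  also have "\<dots> \<le> (1 + (\<Sum>i<m. opnorm (B i))) * (1 + (\<Sum>i<m. opnorm (B i))) ^ n"
    by (intro mult_mono b ih) (auto simp: opnorm_nonneg sum_nonneg)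
  finally show ?case by simp
qed

lemma lemmaA:
  fixes B :: "nat \<Rightarrow> real^'d^'d"
  assumes rho: "\<rho> > 0" and zs: "z \<in> seqs m"
  and H: "\<And>q. 0 < q \<Longrightarrow> q < \<rho> \<Longrightarrow> \<forall>M. \<exists>n\<ge>M. q^n < opnorm (wprod B z n)"
  shows "\<exists>k\<ge>K. \<forall>j\<in>{1..N}. \<rho>^j/2 \<le> opnorm (wprod B (sh k z) j)"
proof (rule ccontr)
  assume "\<not> ?thesis"
  then have bad: "\<And>k. k \<ge> K \<Longrightarrow> \<exists>j\<in>{1..N}. opnorm (wprod B (sh k z) j) < \<rho>^j/2"
    by (metis not_le)
  from bad[of K] have N1: "N \<ge> 1" by auto
  define c where "c = 1 + (\<Sum>i<m. opnorm (B i))"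
  have c1: "c \<ge> 1" unfolding c_def by (simp add: sum_nonneg opnorm_nonneg)
  define a where "a = (\<lambda>n. opnorm (wprod B z n))"
  have a0: "\<And>n. 0 \<le> a n" unfolding a_def by (simp add: opnorm_nonneg)
  define A where "A = a K"
  define \<theta> where "\<theta> = (1/2::real) powr (1 / real N)"
  have th0: "0 < \<theta>" unfolding \<theta>_def by simp
  have th1: "\<theta> < 1" unfolding \<theta>_def using N1 powr_less_mono2[of "1 / real N" "1/2" 1] by simp
  have thN: "\<theta> ^ N = 1/2" unfolding \<theta>_def using N1
    by (simp add: powr_realpow[symmetric] powr_powr)
  have thj: "\<And>j. j \<le> N \<Longrightarrow> 1/2 \<le> \<theta> ^ j"
    using thN th0 th1 by (metis power_decreasing less_imp_le)
  define r where "r = \<rho> * \<theta>"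
  have r0: "0 < r" unfolding r_def using rho th0 by simp
  have rr: "r < \<rho>" unfolding r_def using rho th1 by simp
  have shletters: "\<And>t l. \<forall>i\<in>{1..l}. sh t z i < m" using zs by (simp add: sh_def seqs_def)
  have split: "\<And>t l. a (t + l) \<le> opnorm (wprod B (sh t z) l) * a t"
    unfolding a_def by (simp add: wprod_split opnorm_mult)
  have claim: "\<exists>t. K \<le> t \<and> a t \<le> A * r^(t-K) \<and> t \<le> n \<and> n \<le> t + N" if "n \<ge> K" for n
    using that
  proof (induction n rule: nat_induct_at_least)
    case base then show ?case by (auto simp: A_def)
  next
    case (Suc n)
    then obtain t where t: "K \<le> t" "a t \<le> A * r^(t-K)" "t \<le> n" "n \<le> t + N" by auto
    show ?case
    proof (cases "Suc n \<le> t + N")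
      case True then show ?thesis using t by (intro exI[of _ t]) auto
    next
      case False
      then have nt: "n = t + N" using t by auto
      from bad[OF t(1)] obtain j where j: "j \<in> {1..N}" "opnorm (wprod B (sh t z) j) < \<rho>^j/2" by auto
      have "a (t + j) \<le> opnorm (wprod B (sh t z) j) * a t" by (rule split)
      also have "\<dots> \<le> (\<rho>^j/2) * (A * r^(t-K))"
        using j(2) t(2) a0 rho by (intro mult_mono) (auto simp: opnorm_nonneg)
      also have "\<dots> \<le> (\<rho>^j * \<theta>^j) * (A * r^(t-K))"
      proof -
        have "\<rho>^j/2 \<le> \<rho>^j * \<theta>^j" using thj[of j] j(1) rho
          by (metis (no_types, lifting) atLeastAtMost_iff mult.commute mult_left_mono
              times_divide_eq_right zero_le_power less_imp_le mult_1 divide_inverse inverse_eq_divide)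
        moreover have "0 \<le> A * r^(t-K)" using a0 r0 by (simp add: A_def)
        ultimately show ?thesis by (rule mult_right_mono)
      qed
      also have "\<dots> = A * r^(t + j - K)"
        using t(1) by (simp add: r_def power_mult_distrib power_add[symmetric] algebra_simps)
      finally have "a (t+j) \<le> A * r^(t + j - K)" .
      then show ?thesis using t j nt by (intro exI[of _ "t+j"]) auto
    qed
  qed
  define \<mu> where "\<mu> = min 1 r"
  have mu0: "0 < \<mu>" "\<mu> \<le> 1" "\<mu> \<le> r" using r0 by (auto simp: \<mu>_def)
  define D where "D = c^N * A / \<mu>^(N+K)"
  have bound: "a n \<le> D * r^n" if nK: "n \<ge> K" for n
  proof -
    obtain t where t: "K \<le> t" "a t \<le> A * r^(t-K)" "t \<le> n" "n \<le> t + N"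
      using claim[OF nK] by auto
    have "a n = a (t + (n - t))" using t by simp
    also have "\<dots> \<le> opnorm (wprod B (sh t z) (n-t)) * a t" by (rule split)
    also have "\<dots> \<le> c^(n-t) * (A * r^(t-K))"
      using wprod_bound[OF shletters, of B t "n-t"] t(2) a0 c1
      by (intro mult_mono) (auto simp: c_def[symmetric] opnorm_nonneg)
    also have "\<dots> \<le> c^N * (A * r^(t-K))"
      using t c1 a0 r0 by (intro mult_right_mono power_increasing) (auto simp: A_def)
    also have "r^(t-K) \<le> r^n / \<mu>^(N+K)"
    proof -
      have e: "r^n = r^(t-K) * r^(n - t + K)" using t by (simp add: power_add[symmetric])
      have "\<mu>^(N+K) \<le> \<mu>^(n-t+K)" using t mu0 by (intro power_decreasing) auto
      also have "\<dots> \<le> r^(n-t+K)" using mu0 by (intro power_mono) auto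
      finally have "\<mu>^(N+K) \<le> r^(n-t+K)" .
      then have "r^(t-K) * \<mu>^(N+K) \<le> r^n" unfolding e using r0 by (intro mult_left_mono) auto
      then show ?thesis using mu0 by (simp add: field_simps)
    qed
    then have "c^N * (A * r^(t-K)) \<le> c^N * (A * (r^n / \<mu>^(N+K)))"
      using c1 a0 by (intro mult_left_mono) (auto simp: A_def)
    finally show ?thesis by (simp add: D_def)
  qed
  define q where "q = (r + \<rho>)/2"
  have q: "0 < q" "q < \<rho>" "r < q" using r0 rr by (auto simp: q_def)
  have "(\<lambda>n. (r/q)^n) \<longlonglongrightarrow> 0" using q r0 by (intro LIMSEQ_power_zero) auto
  then have "(\<lambda>n. D * (r/q)^n) \<longlonglongrightarrow> 0" by (rule tendsto_mult_right_zero)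
  then have "eventually (\<lambda>n. D * (r/q)^n < 1) sequentially"
    by (intro order_tendstoD) auto
  then obtain M where M: "\<And>n. n \<ge> M \<Longrightarrow> D * (r/q)^n < 1" by (auto simp: eventually_sequentially)
  obtain n where n: "n \<ge> max M K" "q^n < a n" using H[OF q(1) q(2)] unfolding a_def by (metis max.cobounded1 max.cobounded2 order_trans max_def)
  have "a n \<le> D * r^n" using bound n by auto
  also have "D * r^n = D * (r/q)^n * q^n" using q by (simp add: power_divide)
  also have "\<dots> \<le> 1 * q^n" using M[of n] n q by (intro mult_right_mono) auto
  finally show False using n by simp
qed



fun kp :: "nat set \<Rightarrow> (nat \<Rightarrow> nat \<Rightarrow> nat) \<Rightarrow> nat \<Rightarrow> nat \<Rightarrow> nat \<Rightarrow> nat" where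
  "kp S f m 0 = (\<lambda>i. 0)"
| "kp S f m (Suc L) = (kp S f m L)(Suc L := (SOME a. a < m \<and>
      infinite {n\<in>S. \<forall>i\<in>{1..Suc L}. f n i = ((kp S f m L)(Suc L := a)) i}))"

lemma kp_stable: "i \<le> L \<Longrightarrow> kp S f m (L + d) i = kp S f m L i"
  by (induction d) auto

lemma kp_good:
  fixes S :: "nat set" and f :: "nat \<Rightarrow> nat \<Rightarrow> nat"
  assumes "infinite S" "\<forall>n\<in>S. \<forall>i. f n i < m"
  shows "infinite {n\<in>S. \<forall>i\<in>{1..L}. f n i = kp S f m L i} \<and> (\<forall>i. kp S f m L i < m)"
proof (induction L)
  case 0
  have m: "m > 0" using assms by (metis finite.emptyI gr_zeroI less_nat_zero_code ex_in_conv)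
  then show ?case using assms by auto
next
  case (Suc L)
  let ?T = "{n\<in>S. \<forall>i\<in>{1..L}. f n i = kp S f m L i}"
  let ?A = "\<lambda>a. {n\<in>S. \<forall>i\<in>{1..Suc L}. f n i = ((kp S f m L)(Suc L := a)) i}"
  have A: "?A a = {n\<in>?T. f n (Suc L) = a}" for a
    by (auto simp: le_Suc_eq)
  have "?T \<subseteq> (\<Union>a\<in>{..<m}. ?A a)" using assms(2) by (auto simp: A)
  then have "\<exists>a\<in>{..<m}. infinite (?A a)" using Suc.IH
    by (meson finite_UN_I finite_lessThan finite_subset)
  then obtain a0 where "a0 < m" "infinite (?A a0)" by blast
  then have ex: "\<exists>a. a < m \<and> infinite (?A a)" by blast
  have "(SOME a. a < m \<and> infinite (?A a)) < m \<and> infinite (?A (SOME a. a < m \<and> infinite (?A a)))"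
    by (rule someI_ex[OF ex])
  then show ?case using Suc.IH by auto
qed

lemma koenig:
  fixes S :: "nat set" and f :: "nat \<Rightarrow> nat \<Rightarrow> nat"
  assumes "infinite S" "\<forall>n\<in>S. \<forall>i. f n i < m"
  shows "\<exists>w\<in>seqs m. \<forall>L. infinite {n\<in>S. \<forall>i\<in>{1..L}. f n i = w i}"
proof -
  define w where "w = (\<lambda>i. kp S f m i i)"
  have eq: "kp S f m L i = w i" if "i \<le> L" for L i
    using kp_stable[of i i S f m "L - i"] that by (simp add: w_def)
  have "w \<in> seqs m" using kp_good[OF assms] by (simp add: w_def seqs_def)
  moreover have "infinite {n\<in>S. \<forall>i\<in>{1..L}. f n i = w i}" for L
  proof -
    have "{n\<in>S. \<forall>i\<in>{1..L}. f n i = w i} = {n\<in>S. \<forall>i\<in>{1..L}. f n i = kp S f m L i}"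
      using eq by auto
    then show ?thesis using kp_good[OF assms] by simp
  qed
  ultimately show ?thesis by blast
qed



definition cnd :: "real \<Rightarrow> (nat \<Rightarrow> real^'d^'d) \<Rightarrow> nat \<Rightarrow> (nat\<Rightarrow>nat) \<Rightarrow> bool" where
  "cnd \<rho> B N w \<longleftrightarrow> (\<forall>j\<in>{1..N}. \<rho>^j/2 \<le> opnorm (wprod B w j))"

definition clos :: "nat \<Rightarrow> (nat\<Rightarrow>nat) set \<Rightarrow> bool" where
  "clos m Z \<longleftrightarrow> (\<forall>w\<in>seqs m. (\<forall>L. \<exists>z\<in>Z. \<forall>i\<in>{1..L}. z i = w i) \<longrightarrow> w \<in> Z)"

definition Om :: "nat \<Rightarrow> (nat\<Rightarrow>nat) \<Rightarrow> (nat\<Rightarrow>nat) set" where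
  "Om m y = {w\<in>seqs m. \<forall>L K. \<exists>k\<ge>K. \<forall>i\<in>{1..L}. y (k+i) = w i}"

definition Fam :: "real \<Rightarrow> (nat \<Rightarrow> real^'d^'d) \<Rightarrow> nat \<Rightarrow> (nat\<Rightarrow>nat) set \<Rightarrow> (nat\<Rightarrow>nat) set set" where
  "Fam \<rho> B m Z0 = {Z. Z \<subseteq> Z0 \<and> clos m Z \<and> (\<forall>z\<in>Z. sh 1 z \<in> Z) \<and> (\<forall>N. \<exists>z\<in>Z. cnd \<rho> B N z)}"

lemma map_upt_eq:
  "map y [a+1..<a+n+1] = map y' [b+1..<b+n+1] \<longleftrightarrow> (\<forall>i<n. y (a+1+i) = y' (b+1+i))"
  by (simp add: list_eq_iff_nth_eq del: upt_Suc)

lemma cnd_mono: "cnd \<rho> B N w \<Longrightarrow> L \<le> N \<Longrightarrow> cnd \<rho> B L w"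
  by (auto simp: cnd_def)

lemma cnd_cong: "(\<forall>i\<in>{1..N}. w i = w' i) \<Longrightarrow> cnd \<rho> B N w = cnd \<rho> B N w'"
proof -
  assume a: "\<forall>i\<in>{1..N}. w i = w' i"
  have "wprod B w j = wprod B w' j" if "j \<le> N" for j
    using a that by (intro wprod_cong) auto
  then show ?thesis by (auto simp: cnd_def)
qed

lemma cnd_zero: "cnd 0 B N w"
  by (auto simp: cnd_def opnorm_nonneg zero_power)

lemma sh_seqs: "z \<in> seqs m \<Longrightarrow> sh k z \<in> seqs m"
  by (auto simp: seqs_def sh_def)

lemma sh_iter: "(\<forall>z\<in>Z. sh 1 z \<in> Z) \<Longrightarrow> z \<in> Z \<Longrightarrow> sh k z \<in> Z"
proof (induction k)
  case 0 then show ?case by (simp add: sh_def)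
next
  case (Suc k)
  have "sh (Suc k) z = sh 1 (sh k z)" by (auto simp: sh_def)
  then show ?case using Suc by auto
qed

lemma H_strong:
  assumes rho: "\<rho> > 0" and c: "\<forall>N. cnd \<rho> B N y"
  shows "\<And>q. 0 < q \<Longrightarrow> q < \<rho> \<Longrightarrow> \<forall>M. \<exists>n\<ge>M. q^n < opnorm (wprod B y n)"
proof -
  fix q :: real assume q: "0 < q" "q < \<rho>"
  have "(\<lambda>n. (q/\<rho>)^n) \<longlonglongrightarrow> 0" using q rho by (intro LIMSEQ_power_zero) auto
  then have "eventually (\<lambda>n. (q/\<rho>)^n < 1/2) sequentially"
    by (intro order_tendstoD) auto
  then obtain M0 where M0: "\<And>n. n \<ge> M0 \<Longrightarrow> (q/\<rho>)^n < 1/2" by (auto simp: eventually_sequentially)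
  show "\<forall>M. \<exists>n\<ge>M. q^n < opnorm (wprod B y n)"
  proof
    fix M
    define n where "n = max M (max M0 1)"
    have "q^n = (q/\<rho>)^n * \<rho>^n" using rho by (simp add: power_divide)
    also have "\<dots> < 1/2 * \<rho>^n" using M0[of n] rho by (intro mult_strict_right_mono) (auto simp: n_def)
    also have "\<dots> \<le> opnorm (wprod B y n)"
    proof -
      have "n \<in> {1..n}" by (auto simp: n_def)
      then have "\<rho>^n/2 \<le> opnorm (wprod B y n)" using c unfolding cnd_def by blast
      then show ?thesis by simp
    qed
    finally show "\<exists>n\<ge>M. q^n < opnorm (wprod B y n)" by (auto simp: n_def intro: exI[of _ n])
  qed
qed

lemma lemmaA':
  fixes B :: "nat \<Rightarrow> real^'d^'d"
  assumes rho: "\<rho> \<ge> 0" and zs: "z \<in> seqs m"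
  and H: "\<rho> > 0 \<Longrightarrow> (\<And>q. 0 < q \<Longrightarrow> q < \<rho> \<Longrightarrow> \<forall>M. \<exists>n\<ge>M. q^n < opnorm (wprod B z n))"
  shows "infinite {k. cnd \<rho> B N (sh k z)}"
proof (cases "\<rho> = 0")
  case True then show ?thesis by (simp add: cnd_zero)
next
  case False
  then have r: "\<rho> > 0" using rho by simp
  show ?thesis unfolding infinite_nat_iff_unbounded_le
    using lemmaA[OF r zs H[OF r]] by (auto simp: cnd_def)
qed

lemma all_cnd:
  assumes Z: "Z \<in> Fam \<rho> B m Z0" and Z0: "Z0 \<subseteq> seqs m"
  shows "\<exists>y\<in>Z. \<forall>N. cnd \<rho> B N y"
proof -
  have "\<forall>N. \<exists>z. z \<in> Z \<and> cnd \<rho> B N z" using Z by (auto simp: Fam_def)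
  then obtain g where g: "\<And>N. g N \<in> Z \<and> cnd \<rho> B N (g N)" by metis
  have gl: "\<forall>n\<in>UNIV. \<forall>i. g n i < m" using g Z Z0 by (auto simp: Fam_def seqs_def)
  obtain w where w: "w \<in> seqs m" "\<And>L. infinite {n\<in>UNIV. \<forall>i\<in>{1..L}. g n i = w i}"
    using koenig[OF infinite_UNIV_nat gl] by blast
  have ex: "\<exists>n\<ge>L. \<forall>i\<in>{1..L}. g n i = w i" for L
    using w(2)[of L] unfolding infinite_nat_iff_unbounded_le by auto
  have "\<forall>L. \<exists>z\<in>Z. \<forall>i\<in>{1..L}. z i = w i" using ex g by blast
  then have "w \<in> Z" using Z w(1) unfolding Fam_def clos_def by blast
  moreover have "cnd \<rho> B L w" for L
  proof -
    obtain n where n: "n \<ge> L" "\<forall>i\<in>{1..L}. g n i = w i" using ex by blast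
    have "cnd \<rho> B L (g n)" using g[of n] n(1) cnd_mono by blast
    then show ?thesis using cnd_cong[OF n(2), of \<rho> B] by simp
  qed
  ultimately show ?thesis by blast
qed

lemma Om_Fam:
  assumes Z: "Z \<in> Fam \<rho> B m Z0" and Z0: "Z0 \<subseteq> seqs m" and rho: "\<rho> \<ge> 0"
    and y: "y \<in> Z" "\<forall>N. cnd \<rho> B N y"
  shows "Om m y \<in> Fam \<rho> B m Z0 \<and> Om m y \<subseteq> Z"
proof -
  have inv: "\<forall>z\<in>Z. sh 1 z \<in> Z" and clZ: "clos m Z" and ZZ0: "Z \<subseteq> Z0" using Z by (auto simp: Fam_def)
  have ys: "y \<in> seqs m" using y ZZ0 Z0 by auto
  have sub: "Om m y \<subseteq> Z"
  proof
    fix w assume w: "w \<in> Om m y"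
    have "\<exists>z\<in>Z. \<forall>i\<in>{1..L}. z i = w i" for L
    proof -
      obtain k where "\<forall>i\<in>{1..L}. y (k+i) = w i" using w unfolding Om_def by blast
      then show ?thesis using sh_iter[OF inv y(1), of k] by (auto simp: sh_def)
    qed
    then show "w \<in> Z" using clZ w by (auto simp: clos_def Om_def)
  qed
  have cl: "clos m (Om m y)"
    unfolding clos_def
  proof (intro ballI impI)
    fix w assume ws: "w \<in> seqs m" and a: "\<forall>L. \<exists>z\<in>Om m y. \<forall>i\<in>{1..L}. z i = w i"
    have "\<exists>k\<ge>K. \<forall>i\<in>{1..L}. y (k+i) = w i" for L K
    proof -
      obtain z where z: "z \<in> Om m y" "\<forall>i\<in>{1..L}. z i = w i" using a by blast
      obtain k where "k \<ge> K" "\<forall>i\<in>{1..L}. y (k+i) = z i" using z(1) unfolding Om_def by blast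
      then show ?thesis using z(2) by auto
    qed
    then show "w \<in> Om m y" using ws by (auto simp: Om_def)
  qed
  have shi: "\<forall>z\<in>Om m y. sh 1 z \<in> Om m y"
  proof
    fix w assume w: "w \<in> Om m y"
    have "\<exists>k\<ge>K. \<forall>i\<in>{1..L}. y (k+i) = sh 1 w i" for L K
    proof -
      obtain k where k: "k \<ge> K" "\<forall>i\<in>{1..L+1}. y (k+i) = w i" using w unfolding Om_def by blast
      have "\<forall>i\<in>{1..L}. y ((k+1)+i) = sh 1 w i"
      proof
        fix i assume "i \<in> {1..L}"
        then have "1+i \<in> {1..L+1}" by auto
        then have "y (k + (1+i)) = w (1+i)" using k(2) by blast
        then show "y ((k+1)+i) = sh 1 w i" by (simp add: sh_def)
      qed
      then show ?thesis using k(1) by (intro exI[of _ "k+1"]) auto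
    qed
    then show "sh 1 w \<in> Om m y" using w sh_seqs[of w m 1] by (auto simp: Om_def)
  qed
  have G: "\<exists>z\<in>Om m y. cnd \<rho> B N z" for N
  proof -
    have Hy: "\<rho> > 0 \<Longrightarrow> (\<And>q. 0 < q \<Longrightarrow> q < \<rho> \<Longrightarrow> \<forall>M. \<exists>n\<ge>M. q^n < opnorm (wprod B y n))"
      using H_strong y(2) by blast
    let ?S = "{k. cnd \<rho> B N (sh k y)}"
    have inf: "infinite ?S" by (rule lemmaA'[OF rho ys Hy])
    have fl: "\<forall>n\<in>?S. \<forall>i. sh n y i < m" using ys by (auto simp: seqs_def sh_def)
    obtain w where w: "w \<in> seqs m" "\<And>L. infinite {n\<in>?S. \<forall>i\<in>{1..L}. sh n y i = w i}"
      using koenig[OF inf fl] by blast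
    have "w \<in> Om m y"
    proof -
      have "\<exists>k\<ge>K. \<forall>i\<in>{1..L}. y (k+i) = w i" for L K
        using w(2)[of L] unfolding infinite_nat_iff_unbounded_le sh_def by blast
      then show ?thesis using w(1) by (auto simp: Om_def)
    qed
    moreover have "cnd \<rho> B N w"
    proof -
      obtain k where "k \<in> ?S" "\<forall>i\<in>{1..N}. sh k y i = w i"
        using w(2)[of N] not_finite_existsD by blast
      then show ?thesis using cnd_cong by blast
    qed
    ultimately show ?thesis by blast
  qed
  show ?thesis using sub cl shi G ZZ0 by (auto simp: Fam_def)
qed



lemma prefix_eq: "map z [1..<L+1] = map w [1..<L+1] \<longleftrightarrow> (\<forall>i\<in>{1..L}. z i = w i)"
proof -
  have "(\<forall>i<L. z (1+i) = w (1+i)) \<longleftrightarrow> (\<forall>i\<in>{1..L}. z i = w i)"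
  proof
    assume a: "\<forall>i<L. z (1+i) = w (1+i)"
    show "\<forall>i\<in>{1..L}. z i = w i"
    proof
      fix i assume "i \<in> {1..L}"
      then have "i - 1 < L" "1 + (i - 1) = i" by auto
      then show "z i = w i" using a by metis
    qed
  qed auto
  then show ?thesis using map_upt_eq[of z 0 L w 0] by simp
qed

lemma FamD:
  assumes "Z \<in> Fam \<rho> B m Z0"
  shows "Z \<subseteq> Z0" "clos m Z" "\<forall>z\<in>Z. sh 1 z \<in> Z" "\<forall>N. \<exists>z\<in>Z. cnd \<rho> B N z"
  using assms by (simp_all add: Fam_def)

lemma FamI:
  assumes "Z \<subseteq> Z0" "clos m Z" "\<forall>z\<in>Z. sh 1 z \<in> Z" "\<forall>N. \<exists>z\<in>Z. cnd \<rho> B N z"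
  shows "Z \<in> Fam \<rho> B m Z0"
  using assms by (simp add: Fam_def)

lemma chain_Fam:
  assumes C: "C \<noteq> {}" "C \<subseteq> Fam \<rho> B m Z0" and ch: "\<forall>X\<in>C. \<forall>Y\<in>C. X \<subseteq> Y \<or> Y \<subseteq> X"
    and Z0: "Z0 \<subseteq> seqs m"
  shows "\<Inter>C \<in> Fam \<rho> B m Z0"
proof -
  obtain Z1 where Z1: "Z1 \<in> C" using C by blast
  have sub: "\<Inter>C \<subseteq> Z0" using Z1 C FamD(1) by blast
  have cl: "clos m (\<Inter>C)"
    unfolding clos_def
  proof (intro ballI impI)
    fix w assume w: "w \<in> seqs m" and a: "\<forall>L. \<exists>z\<in>\<Inter>C. \<forall>i\<in>{1..L}. z i = w i"
    show "w \<in> \<Inter>C"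
    proof
      fix Z assume "Z \<in> C"
      then have "clos m Z" "\<forall>L. \<exists>z\<in>Z. \<forall>i\<in>{1..L}. z i = w i" using C a FamD(2) by blast+
      then show "w \<in> Z" using w unfolding clos_def by blast
    qed
  qed
  have inv: "\<forall>z\<in>\<Inter>C. sh 1 z \<in> \<Inter>C" using C FamD(3) by blast
  have G: "\<exists>z\<in>\<Inter>C. cnd \<rho> B N z" for N
  proof -
    define P where "P = (\<lambda>Z L. (\<lambda>z. map z [1..<L+1]) ` {z\<in>Z. cnd \<rho> B N z})"
    have finP: "finite (P Z L)" if "Z \<in> C" for Z L
    proof -
      have ZF: "Z \<subseteq> seqs m" using that C Z0 FamD(1) by blast
      have "P Z L \<subseteq> {xs. set xs \<subseteq> {..<m} \<and> length xs = L}"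
        using ZF unfolding P_def seqs_def by auto blast+
      then show ?thesis by (rule finite_subset) (simp add: finite_lists_length_eq)
    qed
    have neP: "P Z L \<noteq> {}" if "Z \<in> C" for Z L
    proof -
      have "Z \<in> Fam \<rho> B m Z0" using that C by blast
      from FamD(4)[OF this] show ?thesis by (auto simp: P_def)
    qed
    have minP: "\<exists>Zs\<in>C. \<forall>Z'\<in>C. P Zs L \<subseteq> P Z' L" for L
    proof -
      define k where "k = (LEAST k. \<exists>Z\<in>C. card (P Z L) = k)"
      have ex0: "\<exists>k Z. Z \<in> C \<and> card (P Z L) = k" using Z1 by blast
      have "\<exists>Z\<in>C. card (P Z L) = k" unfolding k_def by (rule LeastI_ex) (use ex0 in blast)
      then obtain Zs where Zs: "Zs \<in> C" "card (P Zs L) = k" by blast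
      have le: "k \<le> card (P Z' L)" if "Z' \<in> C" for Z'
        unfolding k_def by (rule Least_le) (use that in blast)
      have "P Zs L \<subseteq> P Z' L" if Z': "Z' \<in> C" for Z'
      proof (cases "Zs \<subseteq> Z'")
        case True then show ?thesis by (auto simp: P_def)
      next
        case False
        then have "Z' \<subseteq> Zs" using ch Zs(1) Z' by blast
        then have s: "P Z' L \<subseteq> P Zs L" by (auto simp: P_def)
        have "card (P Zs L) \<le> card (P Z' L)" using le[OF Z'] Zs(2) by simp
        then have "P Z' L = P Zs L" using s finP[OF Zs(1)] by (intro card_seteq) auto
        then show ?thesis by simp
      qed
      then show ?thesis using Zs(1) by blast
    qed
    have allL: "\<forall>L. \<exists>g. g \<in> seqs m \<and> cnd \<rho> B N g \<and> (\<forall>Z'\<in>C. map g [1..<L+1] \<in> P Z' L)"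
    proof
      fix L
      obtain Zs where Zs: "Zs \<in> C" "\<forall>Z'\<in>C. P Zs L \<subseteq> P Z' L" using minP by blast
      obtain g where g: "g \<in> Zs" "cnd \<rho> B N g" using neP[OF Zs(1), of L] by (auto simp: P_def)
      have "map g [1..<L+1] \<in> P Zs L" using g by (auto simp: P_def)
      moreover have "g \<in> seqs m"
      proof -
        have "Zs \<in> Fam \<rho> B m Z0" using Zs C by blast
        then show ?thesis using FamD(1) g Z0 by blast
      qed
      ultimately show "\<exists>g. g \<in> seqs m \<and> cnd \<rho> B N g \<and> (\<forall>Z'\<in>C. map g [1..<L+1] \<in> P Z' L)"
        using g Zs by blast
    qed
    obtain g where g: "\<And>L. g L \<in> seqs m" "\<And>L. cnd \<rho> B N (g L)"
      "\<And>L Z'. Z' \<in> C \<Longrightarrow> map (g L) [1..<L+1] \<in> P Z' L"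
      using choice[OF allL] by blast
    have gl: "\<forall>n\<in>UNIV. \<forall>i. g n i < m" using g(1) by (auto simp: seqs_def)
    obtain w where w: "w \<in> seqs m" "\<And>L. infinite {n\<in>UNIV. \<forall>i\<in>{1..L}. g n i = w i}"
      using koenig[OF infinite_UNIV_nat gl] by blast
    have ex: "\<exists>n\<ge>L. \<forall>i\<in>{1..L}. g n i = w i" for L
      using w(2)[of L] unfolding infinite_nat_iff_unbounded_le by auto
    have "w \<in> Z" if Z: "Z \<in> C" for Z
    proof -
      have "\<exists>z\<in>Z. \<forall>i\<in>{1..L}. z i = w i" for L
      proof -
        obtain n where n: "n \<ge> L" "\<forall>i\<in>{1..L}. g n i = w i" using ex by blast
        obtain z where z: "z \<in> Z" "map z [1..<n+1] = map (g n) [1..<n+1]"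
          using g(3)[OF Z, of n] by (auto simp: P_def)
        have "\<forall>i\<in>{1..n}. z i = g n i" using z(2) prefix_eq by blast
        then have "\<forall>i\<in>{1..L}. z i = w i" using n by auto
        then show ?thesis using z(1) by blast
      qed
      moreover have "clos m Z" using Z C FamD(2) by blast
      ultimately show ?thesis using w(1) unfolding clos_def by blast
    qed
    moreover have "cnd \<rho> B N w"
    proof -
      obtain n where n: "\<forall>i\<in>{1..N}. g n i = w i" using ex by blast
      then show ?thesis using cnd_cong[OF n, of \<rho> B] g(2)[of n] by simp
    qed
    ultimately show ?thesis by blast
  qed
  show ?thesis using sub cl inv G by (intro FamI) auto
qed

lemma minimal_Fam:
  assumes ne: "Z0 \<in> Fam \<rho> B m Z0" and Z0: "Z0 \<subseteq> seqs m"
  shows "\<exists>Z\<in>Fam \<rho> B m Z0. \<forall>X\<in>Fam \<rho> B m Z0. X \<subseteq> Z \<longrightarrow> X = Z"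
proof -
  let ?F = "Fam \<rho> B m Z0"
  have "\<exists>M\<in>uminus ` ?F. \<forall>X\<in>uminus ` ?F. M \<subseteq> X \<longrightarrow> X = M"
  proof (rule subset_Zorn_nonempty)
    show "uminus ` ?F \<noteq> {}" using ne by blast
  next
    fix \<C> assume ne: "\<C> \<noteq> {}" and ch: "subset.chain (uminus ` ?F) \<C>"
    define C where "C = uminus ` \<C>"
    have CC: "\<C> \<subseteq> uminus ` ?F" and chC0: "\<forall>X\<in>\<C>. \<forall>Y\<in>\<C>. X \<subseteq> Y \<or> Y \<subseteq> X"
      using ch unfolding subset_chain_def by blast+
    have CF: "C \<subseteq> ?F"
    proof
      fix Y assume "Y \<in> C"
      then obtain X where X: "X \<in> \<C>" "Y = - X" unfolding C_def by blast
      then obtain Z where "Z \<in> ?F" "X = - Z" using CC by blast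
      then show "Y \<in> ?F" using X by simp
    qed
    have chC: "\<forall>X\<in>C. \<forall>Y\<in>C. X \<subseteq> Y \<or> Y \<subseteq> X"
    proof (intro ballI)
      fix X Y assume "X \<in> C" "Y \<in> C"
      then obtain X' Y' where "X' \<in> \<C>" "Y' \<in> \<C>" "X = - X'" "Y = - Y'" unfolding C_def by blast
      then show "X \<subseteq> Y \<or> Y \<subseteq> X" using chC0 by auto
    qed
    have Cne: "C \<noteq> {}" using ne unfolding C_def by blast
    have I: "\<Inter>C \<in> ?F" by (rule chain_Fam[OF Cne CF chC Z0])
    have U: "\<Union>\<C> = - \<Inter>C" unfolding C_def by auto
    show "\<Union>\<C> \<in> uminus ` ?F" unfolding U using I by (rule imageI)
  qed
  then obtain M where M: "M \<in> uminus ` ?F" "\<forall>X\<in>uminus ` ?F. M \<subseteq> X \<longrightarrow> X = M" by blast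
  then obtain Z where Z: "Z \<in> ?F" "M = - Z" by blast
  have "\<forall>X\<in>?F. X \<subseteq> Z \<longrightarrow> X = Z"
  proof (intro ballI impI)
    fix X assume X: "X \<in> ?F" "X \<subseteq> Z"
    then have "- X \<in> uminus ` ?F" using imageI[OF X(1), of uminus] by simp
    moreover have "M \<subseteq> - X" using X Z by auto
    ultimately have "- X = M" using M(2) by blast
    then show "X = Z" using Z by simp
  qed
  then show ?thesis using Z(1) by blast
qed



lemma recurrent_Om:
  assumes "y \<in> Om m y" shows "recurrent y"
  unfolding recurrent_def
proof
  fix u assume "u \<in> subwords y"
  then obtain k n where u: "u = map y [k+1..<k+n+1]" unfolding subwords_def by blast
  have len: "length u = n" using u by simp
  show "infinite {k'. map y [k'+1..<k'+length u+1] = u}"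
    unfolding infinite_nat_iff_unbounded_le len
  proof
    fix K
    obtain k'' where k'': "k'' \<ge> K" "\<forall>i\<in>{1..k+n}. y (k''+i) = y i"
      using assms unfolding Om_def by blast
    have "map y [(k''+k)+1..<(k''+k)+n+1] = u"
      unfolding u map_upt_eq
    proof (intro allI impI)
      fix i assume "i < n"
      then have "k+1+i \<in> {1..k+n}" by auto
      then have "y (k''+(k+1+i)) = y (k+1+i)" using k'' by blast
      then show "y (k''+k+1+i) = y (k+1+i)" by (simp add: add.assoc)
    qed
    then show "\<exists>k'\<ge>K. k' \<in> {k'. map y [k'+1..<k'+n+1] = u}" using k'' by (intro exI[of _ "k''+k"]) auto
  qed
qed

lemma subwords_sh: "subwords (sh 1 z) \<subseteq> subwords z"
proof
  fix u assume "u \<in> subwords (sh 1 z)"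
  then obtain k n where u: "u = map (sh 1 z) [k+1..<k+n+1]" "n \<ge> 1" unfolding subwords_def by blast
  have "u = map z [(k+1)+1..<(k+1)+n+1]" unfolding u map_upt_eq by (simp add: sh_def)
  then show "u \<in> subwords z" using u(2) unfolding subwords_def by blast
qed

lemma Z0_clos: "clos m {w\<in>seqs m. subwords w \<subseteq> subwords x}"
  unfolding clos_def
proof (intro ballI impI)
  fix w assume w: "w \<in> seqs m" and a: "\<forall>L. \<exists>z\<in>{w\<in>seqs m. subwords w \<subseteq> subwords x}. \<forall>i\<in>{1..L}. z i = w i"
  have "subwords w \<subseteq> subwords x"
  proof
    fix u assume "u \<in> subwords w"
    then obtain k n where u: "u = map w [k+1..<k+n+1]" "n \<ge> 1" unfolding subwords_def by blast
    obtain z where z: "subwords z \<subseteq> subwords x" "\<forall>i\<in>{1..k+n}. z i = w i" using a by blast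
    have "u = map z [k+1..<k+n+1]" unfolding u map_upt_eq
    proof (intro allI impI)
      fix i assume "i < n"
      then have "k+1+i \<in> {1..k+n}" by auto
      then show "w (k+1+i) = z (k+1+i)" using z by auto
    qed
    then have "u \<in> subwords z" using u(2) unfolding subwords_def by blast
    then show "u \<in> subwords x" using z by blast
  qed
  then show "w \<in> {w\<in>seqs m. subwords w \<subseteq> subwords x}" using w by blast
qed

theorem lemma2:
  fixes B :: "nat \<Rightarrow> real^'d^'d" and m :: nat and x :: "nat \<Rightarrow> nat"
  assumes "x \<in> seqs m"
    and "very_weakly_extremal B m x"
  shows "\<exists>y \<in> seqs m. recurrent y \<and> strongly_extremal B m y \<and> subwords y \<subseteq> subwords x"
proof -
  define \<rho> where "\<rho> = jsr B m"
  have ls: "limsup (\<lambda>n. ereal (opnorm (wprod B x n) powr (1 / real n))) = ereal \<rho>"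
    using assms(2) unfolding very_weakly_extremal_def \<rho>_def .
  have rho0: "\<rho> \<ge> 0"
  proof -
    have "ereal 0 \<le> limsup (\<lambda>n. ereal (opnorm (wprod B x n) powr (1 / real n)))"
      by (intro le_Limsup) auto
    then show ?thesis using ls by simp
  qed
  have Hx: "\<forall>M. \<exists>n\<ge>M. q^n < opnorm (wprod B x n)" if q: "0 < q" "q < \<rho>" for q
  proof (rule ccontr)
    assume "\<not> ?thesis"
    then obtain M where M: "\<And>n. n \<ge> M \<Longrightarrow> opnorm (wprod B x n) \<le> q^n" by (auto simp: not_less)
    have "eventually (\<lambda>n. ereal (opnorm (wprod B x n) powr (1 / real n)) \<le> ereal q) sequentially"
      unfolding eventually_sequentially
    proof (intro exI[of _ "max M 1"] allI impI)
      fix n assume n: "max M 1 \<le> n"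
      have "opnorm (wprod B x n) powr (1 / real n) \<le> (q^n) powr (1 / real n)"
        using M[of n] n by (intro powr_mono2) (auto simp: opnorm_nonneg)
      also have "(q^n) powr (1 / real n) = q"
        using q n by (simp add: powr_realpow[symmetric] powr_powr)
      finally show "ereal (opnorm (wprod B x n) powr (1 / real n)) \<le> ereal q" by simp
    qed
    then have "limsup (\<lambda>n. ereal (opnorm (wprod B x n) powr (1 / real n))) \<le> ereal q"
      by (rule Limsup_bounded)
    then show False using ls q by simp
  qed
  define Z0 where "Z0 = {w\<in>seqs m. subwords w \<subseteq> subwords x}"
  have Z0s: "Z0 \<subseteq> seqs m" unfolding Z0_def by blast
  have xZ0: "x \<in> Z0" using assms(1) unfolding Z0_def by blast
  have Z0inv: "\<forall>z\<in>Z0. sh 1 z \<in> Z0"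
    unfolding Z0_def using sh_seqs subwords_sh by blast
  have Z0G: "\<forall>N. \<exists>z\<in>Z0. cnd \<rho> B N z"
  proof
    fix N
    have "infinite {k. cnd \<rho> B N (sh k x)}"
      by (rule lemmaA'[OF rho0 assms(1)]) (use Hx in blast)
    then obtain k where "cnd \<rho> B N (sh k x)" using not_finite_existsD by blast
    then show "\<exists>z\<in>Z0. cnd \<rho> B N z" using sh_iter[OF Z0inv xZ0] by blast
  qed
  have Z0F: "Z0 \<in> Fam \<rho> B m Z0"
    using Z0inv Z0G Z0_clos[of m x] by (intro FamI) (auto simp: Z0_def)
  obtain Z where Z: "Z \<in> Fam \<rho> B m Z0" "\<And>X. X \<in> Fam \<rho> B m Z0 \<Longrightarrow> X \<subseteq> Z \<Longrightarrow> X = Z"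
    using minimal_Fam[OF Z0F Z0s] by blast
  obtain y where y: "y \<in> Z" "\<forall>N. cnd \<rho> B N y" using all_cnd[OF Z(1) Z0s] by blast
  have Om: "Om m y \<in> Fam \<rho> B m Z0" "Om m y \<subseteq> Z" using Om_Fam[OF Z(1) Z0s rho0 y] by auto
  have "Om m y = Z" using Z(2)[OF Om] .
  then have rec: "recurrent y" using y(1) recurrent_Om by blast
  have yZ0: "y \<in> Z0" using y(1) FamD(1)[OF Z(1)] by blast
  have se: "strongly_extremal B m y"
    unfolding strongly_extremal_def
  proof (intro exI[of _ "1/2"] conjI allI impI)
    fix n :: nat assume "n \<ge> 1"
    then have "n \<in> {1..n}" by simp
    then have "\<rho>^n/2 \<le> opnorm (wprod B y n)" using y(2) unfolding cnd_def by blast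
    then show "1/2 * jsr B m ^ n \<le> opnorm (wprod B y n)" by (simp add: \<rho>_def)
  qed simp
  show ?thesis using yZ0 rec se unfolding Z0_def by blast
qed

end
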